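(* Let $\Gamma\subset\mathbf{Z}^n$ be an almost periodic pattern. Then the mean of $\rho_\Gamma$ equals $D(\Gamma)$: for every $\varepsilon>0$ there exists $R_0>0$ such that for every $R\ge R_0$ and every $x\in\mathbf{R}^n$, $\left|D(\Gamma)-\frac{1}{\operatorname{Card}[B(x,R)]}\sum_{v\in[B(x,R)]}\rho_\Gamma(v)\right|<\varepsilon.$
   Context: Balls are for the sup norm: $B(x,R)=\{y:\max_i|x_i-y_i|<R\}$, $B_R=B(0,R)$, $[B]=B\cap\mathbf{Z}^n$. Relatively dense: there is $R_0>0$ such that every ball of radius at least $R_0$ meets the set; uniformly discrete: there is $r>0$ such that every ball of radius at most $r$ contains at most one point; Delone: both. $D_R^+(\Gamma)=\sup_{x\in\mathbf{R}^n}\frac{\operatorname{Card}(B(x,R)\cap\Gamma)}{\operatorname{Card}(B(x,R)\cap\mathbf{Z}^n)}$. A Delone set $\Gamma\subset\mathbf{Z}^n$ is an almost periodic pattern if for every $\varepsilon>0$ there exist $R_\varepsilon>0$ and a relatively dense set $\mathcal N_\varepsilon$ with $D_R^+((\Gamma+v)\Delta\Gamma)<\varepsilon$ for all $R\ge R_\varepsilon$, $v\in\mathcal N_\varepsilon$. The density of $A\subset\mathbf{Z}^n$ is $D(A)=\lim_{R\to\infty}\operatorname{Card}(A\cap[B_R])/\operatorname{Card}[B_R]$ (the paper uses that these densities exist for the sets considered). For $v\in\mathbf{Z}^n$, $\rho_\Gamma(v)=\frac{D(\Gamma\cap(\Gamma-v))}{D(\Gamma)}$. *)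

theory Defs
  imports "HOL-Analysis.Analysis"
begin

text \<open>Points of Z^n are vectors of type int ^ 'n, points of R^n are real ^ 'n.
  The dimension n = CARD('n) is an arbitrary fixed finite type.\<close>

definition int_to_real_vec :: "int ^ 'n \<Rightarrow> real ^ 'n" where
  "int_to_real_vec z = (\<chi> i. of_int (z $ i))"

definition supball :: "real ^ 'n \<Rightarrow> real \<Rightarrow> (real ^ 'n) set" where
  "supball x R = {y. \<forall>i. \<bar>x $ i - y $ i\<bar> < R}"

definition zball :: "real ^ 'n \<Rightarrow> real \<Rightarrow> (int ^ 'n) set" where
  "zball x R = {z. int_to_real_vec z \<in> supball x R}"

definition relatively_dense :: "(int ^ 'n) set \<Rightarrow> bool" where
  "relatively_dense A \<longleftrightarrow>
     (\<exists>R0>0. \<forall>x :: real ^ 'n. \<forall>R\<ge>R0. zball x R \<inter> A \<noteq> {})"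

definition uniformly_discrete :: "(int ^ 'n) set \<Rightarrow> bool" where
  "uniformly_discrete A \<longleftrightarrow>
     (\<exists>r>0. \<forall>x :: real ^ 'n. \<forall>R\<le>r. \<forall>y\<in>zball x R \<inter> A. \<forall>z\<in>zball x R \<inter> A. y = z)"

definition delone :: "(int ^ 'n) set \<Rightarrow> bool" where
  "delone A \<longleftrightarrow> relatively_dense A \<and> uniformly_discrete A"

definition Dplus :: "real \<Rightarrow> (int ^ 'n) set \<Rightarrow> real" where
  "Dplus R A = (SUP x :: real ^ 'n. real (card (zball x R \<inter> A)) / real (card (zball x R)))"

definition translate :: "(int ^ 'n) set \<Rightarrow> int ^ 'n \<Rightarrow> (int ^ 'n) set" where
  "translate A v = (\<lambda>z. z + v) ` A"

definition almost_periodic_pattern :: "(int ^ 'n) set \<Rightarrow> bool" where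
  "almost_periodic_pattern \<Gamma> \<longleftrightarrow> delone \<Gamma> \<and>
     (\<forall>\<epsilon>>0. \<exists>R\<epsilon>>0. \<exists>N. relatively_dense N \<and>
        (\<forall>R\<ge>R\<epsilon>. \<forall>v\<in>N.
           Dplus R ((translate \<Gamma> v - \<Gamma>) \<union> (\<Gamma> - translate \<Gamma> v)) < \<epsilon>))"

definition density :: "(int ^ 'n) set \<Rightarrow> real" where
  "density A = Lim at_top (\<lambda>R::real. real (card (A \<inter> zball 0 R)) / real (card (zball (0 :: real ^ 'n) R)))"

definition rho :: "(int ^ 'n) set \<Rightarrow> int ^ 'n \<Rightarrow> real" where
  "rho \<Gamma> v = density (\<Gamma> \<inter> translate \<Gamma> (- v)) / density \<Gamma>"

end

theory Submission
  imports Defs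
begin

abbreviation ir :: "int ^ 'n \<Rightarrow> real ^ 'n" where "ir \<equiv> int_to_real_vec"

lemma ir_nth[simp]: "ir z $ i = of_int (z $ i)"
  by (simp add: int_to_real_vec_def)

lemma mem_zball: "z \<in> zball x R \<longleftrightarrow> (\<forall>i. \<bar>x $ i - of_int (z $ i)\<bar> < R)"
  by (simp add: zball_def supball_def)

lemma zball_eq_vecset:
  "zball x R = {z. \<forall>i. z $ i \<in> {\<lfloor>x $ i - R\<rfloor><..<\<lceil>x $ i + R\<rceil>}}"
proof -
  have "\<And>z i. (\<bar>x $ i - of_int (z $ i)\<bar> < R) \<longleftrightarrow> (z $ i \<in> {\<lfloor>x $ i - R\<rfloor><..<\<lceil>x $ i + R\<rceil>})"
    by (simp add: floor_less_iff less_ceiling_iff abs_less_iff) linarith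
  then show ?thesis by (simp add: set_eq_iff mem_zball)
qed

lemma card_vecset:
  fixes S :: "'n::finite \<Rightarrow> 'a set"
  shows "card {z :: 'a ^ 'n. \<forall>i. z $ i \<in> S i} = (\<Prod>i\<in>UNIV. card (S i))"
proof -
  have "bij_betw vec_nth {z :: 'a ^ 'n. \<forall>i. z $ i \<in> S i} (PiE UNIV S)"
    unfolding bij_betw_def
  proof
    show "inj_on vec_nth {z :: 'a ^ 'n. \<forall>i. z $ i \<in> S i}"
      by (auto simp: inj_on_def vec_eq_iff)
    show "vec_nth ` {z :: 'a ^ 'n. \<forall>i. z $ i \<in> S i} = PiE UNIV S"
    proof (auto simp: PiE_def Pi_def)
      fix f assume "\<forall>x. f x \<in> S x"
      then show "f \<in> vec_nth ` {z. \<forall>i. z $ i \<in> S i}"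
        by (intro image_eqI[where x="vec_lambda f"]) auto
    qed
  qed
  then have "card {z :: 'a ^ 'n. \<forall>i. z $ i \<in> S i} = card (PiE UNIV S)"
    by (rule bij_betw_same_card)
  also have "\<dots> = (\<Prod>i\<in>UNIV. card (S i))" by (simp add: card_PiE)
  finally show ?thesis .
qed

lemma finite_vecset:
  fixes S :: "'n::finite \<Rightarrow> 'a set"
  assumes "\<And>i. finite (S i)"
  shows "finite {z :: 'a ^ 'n. \<forall>i. z $ i \<in> S i}"
proof -
  have "finite (PiE UNIV S)" using assms by (simp add: finite_PiE)
  moreover have "{z :: 'a ^ 'n. \<forall>i. z $ i \<in> S i} \<subseteq> vec_lambda ` PiE UNIV S"
    by (auto simp: PiE_def Pi_def intro!: image_eqI[where x="vec_nth _"])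
  ultimately show ?thesis by (meson finite_imageI finite_subset)
qed

lemma finite_zball[simp]: "finite (zball x R)"
  unfolding zball_eq_vecset by (rule finite_vecset) simp

lemma card_zball: "card (zball (x::real^'n) R) = (\<Prod>i\<in>UNIV. nat (\<lceil>x $ i + R\<rceil> - (\<lfloor>x $ i - R\<rfloor> + 1)))"
  unfolding zball_eq_vecset card_vecset by simp

lemma card_interval_bounds:
  fixes x R :: real assumes "R \<ge> 1/2"
  shows "2*R - 1 \<le> real (nat (\<lceil>x + R\<rceil> - (\<lfloor>x - R\<rfloor> + 1)))"
    and "real (nat (\<lceil>x + R\<rceil> - (\<lfloor>x - R\<rfloor> + 1))) \<le> 2*R + 1"
proof -
  have a: "x + R \<le> \<lceil>x + R\<rceil>" "\<lceil>x + R\<rceil> < x + R + 1" by linarith+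
  have b: "\<lfloor>x - R\<rfloor> \<le> x - R" "x - R - 1 < \<lfloor>x - R\<rfloor>" by linarith+
  have c: "\<lceil>x + R\<rceil> - (\<lfloor>x - R\<rfloor> + 1) \<ge> 0"
    using a b assms by linarith
  have d: "real (nat (\<lceil>x + R\<rceil> - (\<lfloor>x - R\<rfloor> + 1))) = of_int \<lceil>x + R\<rceil> - of_int \<lfloor>x - R\<rfloor> - 1"
    using c by simp
  show "2*R - 1 \<le> real (nat (\<lceil>x + R\<rceil> - (\<lfloor>x - R\<rfloor> + 1)))" unfolding d using a b by linarith
  show "real (nat (\<lceil>x + R\<rceil> - (\<lfloor>x - R\<rfloor> + 1))) \<le> 2*R + 1" unfolding d using a b by linarith
qed

lemma card_zball_bounds:
  assumes "R \<ge> 1/2"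
  shows "(2*R - 1) ^ CARD('n) \<le> real (card (zball (x::real^'n) R))"
    and "real (card (zball (x::real^'n) R)) \<le> (2*R + 1) ^ CARD('n)"
proof -
  have eq: "real (card (zball x R)) = (\<Prod>i\<in>UNIV. real (nat (\<lceil>x $ i + R\<rceil> - (\<lfloor>x $ i - R\<rfloor> + 1))))"
    unfolding card_zball by simp
  have "(2*R - 1) ^ CARD('n) = (\<Prod>i\<in>(UNIV::'n set). 2*R - 1)" by simp
  also have "\<dots> \<le> real (card (zball x R))" unfolding eq
    by (rule prod_mono) (use assms card_interval_bounds in auto)
  finally show "(2*R - 1) ^ CARD('n) \<le> real (card (zball (x::real^'n) R))" .
  have "real (card (zball x R)) \<le> (\<Prod>i\<in>(UNIV::'n set). 2*R + 1)" unfolding eq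
    by (rule prod_mono) (use assms card_interval_bounds in auto)
  also have "\<dots> = (2*R + 1) ^ CARD('n)" by simp
  finally show "real (card (zball (x::real^'n) R)) \<le> (2*R + 1) ^ CARD('n)" .
qed

lemma card_zball_pos: "R \<ge> 1 \<Longrightarrow> card (zball (x::real^'n) R) > 0"
proof -
  assume "R \<ge> 1"
  then have "(1::real) \<le> (2*R - 1) ^ CARD('n)" by simp
  also have "\<dots> \<le> real (card (zball x R))" using \<open>R \<ge> 1\<close> card_zball_bounds(1)[of R x] by simp
  finally show ?thesis by simp
qed

lemma zball_translate: "(\<lambda>z. z + v) ` zball x R = zball (x + ir v) R"
proof (rule set_eqI, rule iffI)
  fix z assume "z \<in> (\<lambda>z. z + v) ` zball x R"
  then obtain w where w: "w \<in> zball x R" "z = w + v" by blast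
  have eq: "\<And>i. x $ i + of_int (v $ i) - of_int (z $ i) = x $ i - of_int (w $ i)"
    using w(2) by simp
  have w1: "\<forall>i. \<bar>x $ i - of_int (w $ i)\<bar> < R" using w(1) unfolding mem_zball .
  show "z \<in> zball (x + ir v) R" unfolding mem_zball by (simp only: vector_add_component ir_nth eq w1 simp_thms)
next
  fix z assume z: "z \<in> zball (x + ir v) R"
  have "\<And>i. x $ i - of_int ((z - v) $ i) = x $ i + of_int (v $ i) - of_int (z $ i)"
    by simp
  then have "z - v \<in> zball x R" using z unfolding mem_zball by (simp only: vector_add_component ir_nth simp_thms)
  then show "z \<in> (\<lambda>z. z + v) ` zball x R"
    by (intro image_eqI[where x="z - v"]) auto
qed

lemma card_zball_translate: "card (zball (x + ir v) R) = card (zball x R)"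
proof -
  have "inj_on (\<lambda>z. z + v) (zball x R)" by (simp add: inj_on_def)
  then have "card ((\<lambda>z. z + v) ` zball x R) = card (zball x R)" by (rule card_image)
  then show ?thesis by (simp only: zball_translate)
qed

lemma zball_mono: "R \<le> R' \<Longrightarrow> zball x R \<subseteq> zball x R'"
  by (auto simp: mem_zball) (meson less_le_trans)

lemma zball_shift_sub:
  assumes "\<forall>i. \<bar>z $ i - z' $ i\<bar> < a"
  shows "zball z' (R - a) \<subseteq> zball z R" "zball z R \<subseteq> zball z' (R + a)"
proof -
  have 1: "\<bar>z $ i - y\<bar> < R" if "\<bar>z' $ i - y\<bar> < R - a" for y i
    using assms[rule_format, of i] that by (simp add: abs_less_iff)
  have 2: "\<bar>z' $ i - y\<bar> < R + a" if "\<bar>z $ i - y\<bar> < R" for y i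
    using assms[rule_format, of i] that by (simp add: abs_less_iff)
  from 1 2 show "zball z' (R - a) \<subseteq> zball z R" "zball z R \<subseteq> zball z' (R + a)"
    by (auto simp: mem_zball)
qed

lemma zball_sym: "a \<in> zball (ir y) R \<longleftrightarrow> y \<in> zball (ir a) R"
  by (simp add: mem_zball abs_minus_commute)


definition fr :: "(int ^ 'n) set \<Rightarrow> real ^ 'n \<Rightarrow> real \<Rightarrow> real" where
  "fr A x R = real (card (A \<inter> zball x R)) / real (card (zball x R))"

lemma fr_nonneg: "fr A x R \<ge> 0" by (simp add: fr_def)
lemma fr_le1: "fr A x R \<le> 1"
proof (cases "card (zball x R) = 0")
  case False
  have "card (A \<inter> zball x R) \<le> card (zball x R)" by (intro card_mono) auto
  then have "real (card (A \<inter> zball x R)) \<le> real (card (zball x R))" by simp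
  moreover have "real (card (zball x R)) > 0" using False by (simp add: card_gt_0_iff)
  ultimately show ?thesis unfolding fr_def by (simp add: divide_le_eq_1)
qed (simp add: fr_def)

lemma sandwich_bounds:
  fixes A W1 W2 U :: "'a set"
  assumes "finite W2" "W1 \<subseteq> U" "U \<subseteq> W2" "card W1 > 0"
  shows "real (card (A \<inter> W1)) / real (card W2) \<le> real (card (A \<inter> U)) / real (card U)"
    and "real (card (A \<inter> U)) / real (card U) \<le> (real (card (A \<inter> W1)) + real (card W2) - real (card W1)) / real (card W1)"
proof -
  have fU: "finite U" "finite W1"
    using finite_subset[OF assms(3,1)] finite_subset[OF assms(2)] by auto
  have cU: "card W1 \<le> card U" "card U \<le> card W2"
    by (rule card_mono[OF fU(1) assms(2)], rule card_mono[OF assms(1,3)])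
  have k1: "card (A \<inter> W1) \<le> card (A \<inter> U)" using assms fU by (intro card_mono) auto
  have "A \<inter> U \<subseteq> (A \<inter> W1) \<union> (W2 - W1)" using assms by auto
  then have "card (A \<inter> U) \<le> card ((A \<inter> W1) \<union> (W2 - W1))" using assms fU by (intro card_mono) auto
  also have "\<dots> \<le> card (A \<inter> W1) + card (W2 - W1)" by (rule card_Un_le)
  also have "card (W2 - W1) = card W2 - card W1"
    by (rule card_Diff_subset[OF fU(2)]) (use assms in auto)
  finally have k2n: "card (A \<inter> U) \<le> card (A \<inter> W1) + (card W2 - card W1)" .
  have "card W1 \<le> card W2" using cU by simp
  then have k2: "real (card (A \<inter> U)) \<le> real (card (A \<inter> W1)) + real (card W2) - real (card W1)"
    using k2n by (simp add: of_nat_diff)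
  have pos: "real (card W1) > 0" using assms by simp
  show "real (card (A \<inter> W1)) / real (card W2) \<le> real (card (A \<inter> U)) / real (card U)"
    by (rule frac_le) (use k1 cU pos in auto)
  show "real (card (A \<inter> U)) / real (card U) \<le> (real (card (A \<inter> W1)) + real (card W2) - real (card W1)) / real (card W1)"
    by (rule frac_le) (use k2 cU pos in auto)
qed

lemma sandwich:
  fixes A W1 W2 U U' :: "'a set"
  assumes "finite W2" "W1 \<subseteq> U" "U \<subseteq> W2" "W1 \<subseteq> U'" "U' \<subseteq> W2" "card W1 > 0"
  shows "\<bar>real (card (A \<inter> U)) / real (card U) - real (card (A \<inter> U')) / real (card U')\<bar>
          \<le> 2 * (real (card W2) - real (card W1)) / real (card W1)"
proof -
  define k where "k = real (card (A \<inter> W1))"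
  define w1 where "w1 = real (card W1)"
  define w2 where "w2 = real (card W2)"
  have fW1: "finite W1" using finite_subset[OF assms(3,1)] finite_subset[OF assms(2)] by auto
  have "card (A \<inter> W1) \<le> card W1" using fW1 by (intro card_mono) auto
  moreover have "card W1 \<le> card W2" using assms by (meson card_mono order_trans)
  ultimately have kw: "k \<le> w1" "w1 \<le> w2" "0 \<le> k" "w1 > 0" using assms by (auto simp: k_def w1_def w2_def)
  note b1 = sandwich_bounds[OF assms(1,2,3,6), of A, folded k_def w1_def w2_def]
  note b2 = sandwich_bounds[OF assms(1,4,5,6), of A, folded k_def w1_def w2_def]
  have key: "(k + w2 - w1) / w1 - k / w2 \<le> 2 * (w2 - w1) / w1"
  proof -
    have "k / w1 - k / w2 = k * (w2 - w1) / (w1 * w2)" using kw by (simp add: field_simps)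
    also have "\<dots> \<le> w2 * (w2 - w1) / (w1 * w2)"
      using kw by (intro divide_right_mono mult_right_mono) auto
    also have "\<dots> = (w2 - w1) / w1" using kw by (simp add: field_simps)
    finally have "k / w1 - k / w2 \<le> (w2 - w1) / w1" .
    moreover have "(k + w2 - w1) / w1 = k / w1 + (w2 - w1) / w1" by (simp add: add_divide_distrib diff_divide_distrib)
    moreover have "2 * (w2 - w1) / w1 = (w2 - w1) / w1 + (w2 - w1) / w1" by (simp only: mult_2 add_divide_distrib)
    ultimately show ?thesis by linarith
  qed
  show ?thesis unfolding w1_def[symmetric] w2_def[symmetric] using b1 b2 key by linarith
qed

lemma Q_lim: "((\<lambda>R::real. ((2*R + c) / (2*R - c)) ^ k) \<longlongrightarrow> 1) at_top"
proof -
  have c0: "((\<lambda>R::real. c / R) \<longlongrightarrow> 0) at_top"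
    by (intro tendsto_divide_0[OF tendsto_const] filterlim_at_top_imp_at_infinity filterlim_ident)
  have "((\<lambda>R::real. (2 + c / R) / (2 - c / R)) \<longlongrightarrow> (2 + 0) / (2 - 0)) at_top"
    by (intro tendsto_intros c0) auto
  then have l: "((\<lambda>R::real. (2 + c / R) / (2 - c / R)) \<longlongrightarrow> 1) at_top" by simp
  have "eventually (\<lambda>R::real. (2 + c / R) / (2 - c / R) = (2*R + c) / (2*R - c)) at_top"
    using eventually_gt_at_top[of 0]
  proof eventually_elim
    case (elim R)
    then have "(2 + c / R) / (2 - c / R) = ((2 + c / R) * R) / ((2 - c / R) * R)" by simp
    also have "\<dots> = (2*R + c) / (2*R - c)" using elim by (simp add: algebra_simps)
    finally show ?case .
  qed
  from Lim_transform_eventually[OF l this]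
  have "((\<lambda>R::real. (2*R + c) / (2*R - c)) \<longlongrightarrow> 1) at_top" .
  from tendsto_power[OF this, of k] show ?thesis by simp
qed

lemma boundary:
  assumes "a > 0" "\<epsilon> > 0"
  shows "\<exists>R2. \<forall>R\<ge>R2. \<forall>z z' :: real ^ 'n. (\<forall>i. \<bar>z $ i - z' $ i\<bar> < a) \<longrightarrow> \<bar>fr A z R - fr A z' R\<bar> \<le> \<epsilon>"
proof -
  define c where "c = 2*a + 1"
  have "eventually (\<lambda>R::real. ((2*R + c) / (2*R - c)) ^ CARD('n) < 1 + \<epsilon>/2) at_top"
    using Q_lim[of c "CARD('n)"] assms by (intro order_tendstoD) auto
  moreover have "eventually (\<lambda>R::real. R \<ge> a + 1) at_top" by (rule eventually_ge_at_top)
  ultimately have "eventually (\<lambda>R::real. ((2*R + c) / (2*R - c)) ^ CARD('n) < 1 + \<epsilon>/2 \<and> R \<ge> a + 1) at_top"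
    by (rule eventually_conj)
  then obtain R2 where R2: "\<And>R. R \<ge> R2 \<Longrightarrow> ((2*R + c) / (2*R - c)) ^ CARD('n) < 1 + \<epsilon>/2 \<and> R \<ge> a + 1"
    by (auto simp: eventually_at_top_linorder)
  show ?thesis
  proof (intro exI allI impI)
    fix R and z z' :: "real ^ 'n" assume R: "R \<ge> R2" and zz: "\<forall>i. \<bar>z $ i - z' $ i\<bar> < a"
    have Q: "((2*R + c) / (2*R - c)) ^ CARD('n) < 1 + \<epsilon>/2" and Ra: "R \<ge> a + 1" using R2[OF R] by auto
    define W1 where "W1 = zball z' (R - a)"
    define W2 where "W2 = zball z' (R + a)"
    have zz': "\<forall>i. \<bar>z' $ i - z' $ i\<bar> < a" using assms by simp
    have s: "W1 \<subseteq> zball z R" "zball z R \<subseteq> W2" "W1 \<subseteq> zball z' R" "zball z' R \<subseteq> W2"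
      using zball_shift_sub[OF zz, of R] zball_shift_sub[OF zz', of R] by (auto simp: W1_def W2_def)
    have w1lo: "(2*R - c) ^ CARD('n) \<le> real (card W1)"
      using card_zball_bounds(1)[of "R - a" z'] Ra by (simp add: W1_def c_def algebra_simps)
    have w2hi: "real (card W2) \<le> (2*R + c) ^ CARD('n)"
      using card_zball_bounds(2)[of "R + a" z'] Ra assms by (simp add: W2_def c_def algebra_simps)
    have pos: "(2*R - c) ^ CARD('n) > 0" using Ra by (simp add: c_def)
    then have cW1: "card W1 > 0" using w1lo by linarith
    have "\<bar>fr A z R - fr A z' R\<bar> \<le> 2 * (real (card W2) - real (card W1)) / real (card W1)"
      unfolding fr_def by (rule sandwich) (use s cW1 in \<open>auto simp: W2_def\<close>)
    also have "\<dots> = 2 * (real (card W2) / real (card W1) - 1)" using cW1 by (simp add: field_simps)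
    also have "\<dots> \<le> 2 * (((2*R + c) / (2*R - c)) ^ CARD('n) - 1)"
    proof -
      have "real (card W2) / real (card W1) \<le> (2*R + c) ^ CARD('n) / (2*R - c) ^ CARD('n)"
        by (rule frac_le) (use w1lo w2hi pos in auto)
      also have "\<dots> = ((2*R + c) / (2*R - c)) ^ CARD('n)" by (simp add: power_divide)
      finally show ?thesis by simp
    qed
    finally have fin: "\<bar>fr A z R - fr A z' R\<bar> \<le> 2 * (((2*R + c) / (2*R - c)) ^ CARD('n) - 1)" .
    have aux: "2*(q-1) < \<epsilon>" if "q < 1 + \<epsilon>/2" for q::real using that by (simp add: field_simps)
    have "2 * (((2*R + c) / (2*R - c)) ^ CARD('n) - 1) < \<epsilon>" by (rule aux[OF Q])
    with fin show "\<bar>fr A z R - fr A z' R\<bar> \<le> \<epsilon>" by linarith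
  qed
qed


definition APP :: "(int ^ 'n) set \<Rightarrow> bool" where
  "APP A \<longleftrightarrow> (\<forall>\<epsilon>>0. \<exists>R\<epsilon>>0. \<exists>N. relatively_dense N \<and>
     (\<forall>R\<ge>R\<epsilon>. \<forall>v\<in>N. \<forall>x::real ^ 'n.
        real (card (((translate A v - A) \<union> (A - translate A v)) \<inter> zball x R)) \<le> \<epsilon> * real (card (zball x R))))"

lemma ratio_le_Dplus:
  "real (card (zball x R \<inter> E)) / real (card (zball x R)) \<le> Dplus R E"
proof -
  have "bdd_above (range (\<lambda>x. real (card (zball x R \<inter> E)) / real (card (zball x R))))"
    by (rule bdd_aboveI[where M=1]) (use fr_le1[of E] in \<open>auto simp: fr_def Int_commute\<close>)
  then show ?thesis unfolding Dplus_def by (rule cSUP_upper[OF UNIV_I])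
qed

lemma AP_imp_APP:
  fixes \<Gamma> :: "(int ^ 'n) set"
  assumes "almost_periodic_pattern \<Gamma>"
  shows "APP \<Gamma>"
  unfolding APP_def
proof (intro allI impI)
  fix \<epsilon> :: real assume "\<epsilon> > 0"
  with assms obtain R\<epsilon> N where R: "R\<epsilon> > 0" "relatively_dense N"
    "\<And>R v. R \<ge> R\<epsilon> \<Longrightarrow> v \<in> N \<Longrightarrow> Dplus R ((translate \<Gamma> v - \<Gamma>) \<union> (\<Gamma> - translate \<Gamma> v)) < \<epsilon>"
    unfolding almost_periodic_pattern_def by metis
  show "\<exists>R\<epsilon>>0. \<exists>N. relatively_dense N \<and> (\<forall>R\<ge>R\<epsilon>. \<forall>v\<in>N. \<forall>x::real ^ 'n.
        real (card (((translate \<Gamma> v - \<Gamma>) \<union> (\<Gamma> - translate \<Gamma> v)) \<inter> zball x R)) \<le> \<epsilon> * real (card (zball x R)))"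
  proof (intro exI conjI allI impI ballI)
    show "R\<epsilon> > 0" "relatively_dense N" using R by auto
    fix R v and x :: "real ^ 'n" assume "R \<ge> R\<epsilon>" "v \<in> N"
    define E where "E = (translate \<Gamma> v - \<Gamma>) \<union> (\<Gamma> - translate \<Gamma> v)"
    have D: "real (card (zball x R \<inter> E)) / real (card (zball x R)) < \<epsilon>"
      using ratio_le_Dplus[of x R E] R(3)[OF \<open>R \<ge> R\<epsilon>\<close> \<open>v \<in> N\<close>] unfolding E_def by linarith
    show "real (card (E \<inter> zball x R)) \<le> \<epsilon> * real (card (zball x R))"
    proof (cases "card (zball x R) = 0")
      case True
      then have "zball x R = {}" by simp
      then show ?thesis by simp
    next
      case False
      then have "real (card (zball x R)) > 0" by (simp add: card_gt_0_iff)
      with D show ?thesis by (simp add: Int_commute divide_less_eq)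
    qed
  qed
qed

lemma card_Int_diff_bound:
  assumes "finite U"
  shows "\<bar>real (card (A \<inter> U)) - real (card (B \<inter> U))\<bar> \<le> real (card (((A - B) \<union> (B - A)) \<inter> U))"
proof -
  have a: "card (A \<inter> U) \<le> card (B \<inter> U) + card (((A - B) \<union> (B - A)) \<inter> U)"
  proof -
    have "card (A \<inter> U) \<le> card ((B \<inter> U) \<union> (((A - B) \<union> (B - A)) \<inter> U))"
      by (rule card_mono) (use assms in auto)
    also have "\<dots> \<le> card (B \<inter> U) + card (((A - B) \<union> (B - A)) \<inter> U)" by (rule card_Un_le)
    finally show ?thesis .
  qed
  have b: "card (B \<inter> U) \<le> card (A \<inter> U) + card (((A - B) \<union> (B - A)) \<inter> U)"
  proof -
    have "card (B \<inter> U) \<le> card ((A \<inter> U) \<union> (((A - B) \<union> (B - A)) \<inter> U))"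
      by (rule card_mono) (use assms in auto)
    also have "\<dots> \<le> card (A \<inter> U) + card (((A - B) \<union> (B - A)) \<inter> U)" by (rule card_Un_le)
    finally show ?thesis .
  qed
  from a b show ?thesis by linarith
qed

lemma card_translate_Int:
  "card (translate A v \<inter> zball (x + ir v) R) = card (A \<inter> zball x R)"
proof -
  have "translate A v \<inter> zball (x + ir v) R = (\<lambda>z. z + v) ` (A \<inter> zball x R)"
    unfolding translate_def zball_translate[symmetric] by (auto simp: inj_on_def)
  moreover have "inj_on (\<lambda>z. z + v) (A \<inter> zball x R)" by (simp add: inj_on_def)
  ultimately show ?thesis by (simp add: card_image)
qed

lemma fr_shift:
  assumes "\<epsilon> \<ge> 0" "real (card (((translate A v - A) \<union> (A - translate A v)) \<inter> zball (y + ir v) R)) \<le> \<epsilon> * real (card (zball (y + ir v) R))"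
  shows "\<bar>fr A (y + ir v) R - fr A y R\<bar> \<le> \<epsilon>"
proof (cases "card (zball y R) = 0")
  case True
  then have "card (zball (y + ir v) R) = 0" by (simp add: card_zball_translate)
  with True have "fr A (y + ir v) R = 0" "fr A y R = 0" by (auto simp: fr_def)
  then show ?thesis using assms(1) by simp
next
  case False
  define c where "c = real (card (zball y R))"
  have c: "c > 0" "real (card (zball (y + ir v) R)) = c" using False by (auto simp: c_def card_zball_translate)
  have "\<bar>real (card (translate A v \<inter> zball (y + ir v) R)) - real (card (A \<inter> zball (y + ir v) R))\<bar>
        \<le> real (card (((translate A v - A) \<union> (A - translate A v)) \<inter> zball (y + ir v) R))"
    by (rule card_Int_diff_bound) simp
  then have "\<bar>real (card (A \<inter> zball y R)) - real (card (A \<inter> zball (y + ir v) R))\<bar> \<le> \<epsilon> * c"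
    using assms(2) c by (simp add: card_translate_Int)
  then have "\<bar>real (card (A \<inter> zball (y + ir v) R)) - real (card (A \<inter> zball y R))\<bar> / c \<le> \<epsilon>"
    using c by (simp add: divide_le_eq abs_minus_commute)
  then show ?thesis unfolding fr_def c(2) c_def[symmetric] diff_divide_distrib[symmetric] abs_divide
    using c by simp
qed

lemma osc:
  assumes "APP A" "\<epsilon> > 0"
  shows "\<exists>R1. \<forall>R\<ge>R1. \<forall>x y :: real ^ 'n. \<bar>fr A x R - fr A y R\<bar> \<le> \<epsilon>"
proof -
  obtain R\<epsilon> N where RN: "R\<epsilon> > 0" "relatively_dense N"
    "\<And>R v x. R \<ge> R\<epsilon> \<Longrightarrow> v \<in> N \<Longrightarrow> real (card (((translate A v - A) \<union> (A - translate A v)) \<inter> zball x R)) \<le> \<epsilon>/2 * real (card (zball (x::real^'n) R))"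
    using assms unfolding APP_def by (metis half_gt_zero)
  obtain R0 where R0: "R0 > 0" "\<And>x::real^'n. zball x R0 \<inter> N \<noteq> {}"
    using RN(2) unfolding relatively_dense_def by (meson order_refl)
  have "\<exists>R2. \<forall>R\<ge>R2. \<forall>z z' :: real ^ 'n. (\<forall>i. \<bar>z $ i - z' $ i\<bar> < R0) \<longrightarrow> \<bar>fr A z R - fr A z' R\<bar> \<le> \<epsilon>/2"
    by (rule boundary) (use R0 assms in auto)
  then obtain R2 where R2: "\<forall>R\<ge>R2. \<forall>z z' :: real ^ 'n. (\<forall>i. \<bar>z $ i - z' $ i\<bar> < R0) \<longrightarrow> \<bar>fr A z R - fr A z' R\<bar> \<le> \<epsilon>/2"
    by blast
  show ?thesis
  proof (intro exI allI impI)
    fix R and x y :: "real ^ 'n" assume R: "max R\<epsilon> R2 \<le> R"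
    obtain v where v: "v \<in> zball (y - x) R0" "v \<in> N" using R0(2)[of "y - x"] by blast
    have 1: "\<bar>fr A (x + ir v) R - fr A x R\<bar> \<le> \<epsilon>/2"
      by (rule fr_shift, simp add: assms(2) less_imp_le, rule RN(3)) (use R v in auto)
    have "\<forall>i. \<bar>(x + ir v) $ i - y $ i\<bar> < R0"
    proof
      fix i
      have "\<bar>(y - x) $ i - of_int (v $ i)\<bar> < R0" using v(1) by (simp add: mem_zball)
      then show "\<bar>(x + ir v) $ i - y $ i\<bar> < R0" by (simp add: abs_minus_commute algebra_simps)
    qed
    then have 2: "\<bar>fr A (x + ir v) R - fr A y R\<bar> \<le> \<epsilon>/2" using R R2 by auto
    from 1 2 show "\<bar>fr A x R - fr A y R\<bar> \<le> \<epsilon>" by linarith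
  qed
qed


lemma sum_card_swap:
  assumes "finite P" "finite Q"
  shows "(\<Sum>p\<in>P. card {q\<in>Q. r p q}) = (\<Sum>q\<in>Q. card {p\<in>P. r p q})"
proof -
  have c: "card {x\<in>X. s x} = (\<Sum>x\<in>X. if s x then 1 else 0)" if "finite X" for X :: "'c set" and s
    using that by (simp add: sum.inter_filter[symmetric])
  show ?thesis using assms by (simp add: c sum.swap[of _ P Q])
qed

lemma dc:
  fixes A :: "(int ^ 'n) set"
  shows "(\<Sum>y\<in>zball (0::real^'n) S. card (A \<inter> zball (ir y) R))
       = (\<Sum>a\<in>A \<inter> zball (0::real^'n) (S + R). card (zball (0::real^'n) S \<inter> zball (ir a) R))"
proof -
  have 1: "A \<inter> zball (ir y) R = {a \<in> A \<inter> zball 0 (S + R). y \<in> zball (ir a) R}"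
    if "y \<in> zball (0::real^'n) S" for y
  proof -
    have "a \<in> zball 0 (S + R)" if "a \<in> zball (ir y) R" for a
    proof -
      have "\<bar>of_int (a $ i)\<bar> < S + R" for i
      proof -
        have "\<bar>of_int (y $ i)\<bar> < S" using \<open>y \<in> zball 0 S\<close> by (simp add: mem_zball)
        moreover have "\<bar>of_int (y $ i) - of_int (a $ i)\<bar> < R" using that by (simp add: mem_zball)
        ultimately show ?thesis by linarith
      qed
      then show ?thesis by (simp add: mem_zball)
    qed
    then show ?thesis using zball_sym by blast
  qed
  have 2: "zball (0::real^'n) S \<inter> zball (ir a) R = {y \<in> zball 0 S. y \<in> zball (ir a) R}" for a :: "int ^ 'n"
    by auto
  have "(\<Sum>y\<in>zball (0::real^'n) S. card (A \<inter> zball (ir y) R))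
      = (\<Sum>y\<in>zball (0::real^'n) S. card {a \<in> A \<inter> zball 0 (S + R). y \<in> zball (ir a) R})"
    by (rule sum.cong) (simp_all add: 1)
  also have "\<dots> = (\<Sum>a\<in>A \<inter> zball (0::real^'n) (S + R). card {y \<in> zball 0 S. y \<in> zball (ir a) R})"
    by (rule sum_card_swap) auto
  also have "\<dots> = (\<Sum>a\<in>A \<inter> zball (0::real^'n) (S + R). card (zball (0::real^'n) S \<inter> zball (ir a) R))"
    by (simp add: 2)
  finally show ?thesis .
qed

lemma card_zball_int_center: "card (zball (ir (a::int^'n)) R) = card (zball (0::real^'n) R)"
  using card_zball_translate[of "0::real^'n" a R] by simp

lemma dc_bounds:
  fixes A :: "(int ^ 'n) set"
  assumes "R \<ge> 0"
  shows "real (card (zball (0::real^'n) R)) * real (card (A \<inter> zball (0::real^'n) (S - R)))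
           \<le> (\<Sum>y\<in>zball (0::real^'n) S. real (card (A \<inter> zball (ir y) R)))"
    and "(\<Sum>y\<in>zball (0::real^'n) S. real (card (A \<inter> zball (ir y) R)))
           \<le> real (card (zball (0::real^'n) R)) * real (card (A \<inter> zball (0::real^'n) (S + R)))"
proof -
  define cR where "cR = real (card (zball (0::real^'n) R))"
  have eq: "(\<Sum>y\<in>zball (0::real^'n) S. real (card (A \<inter> zball (ir y) R)))
       = (\<Sum>a\<in>A \<inter> zball (0::real^'n) (S + R). real (card (zball (0::real^'n) S \<inter> zball (ir a) R)))"
    using dc[where S=S and A=A and R=R] by (metis of_nat_sum)
  have le: "real (card (zball (0::real^'n) S \<inter> zball (ir a) R)) \<le> cR" for a :: "int ^ 'n"
    unfolding cR_def card_zball_int_center[of a R, symmetric] by (simp add: card_mono)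
  show "(\<Sum>y\<in>zball (0::real^'n) S. real (card (A \<inter> zball (ir y) R))) \<le> cR * real (card (A \<inter> zball (0::real^'n) (S + R)))"
    unfolding eq using sum_bounded_above[of "A \<inter> zball (0::real^'n) (S + R)" _ cR, OF le]
    by (simp add: mult.commute)
  have sub: "A \<inter> zball (0::real^'n) (S - R) \<subseteq> A \<inter> zball 0 (S + R)"
    using zball_mono[of "S - R" "S + R" 0] assms by auto
  have eqc: "real (card (zball (0::real^'n) S \<inter> zball (ir a) R)) = cR" if "a \<in> zball (0::real^'n) (S - R)" for a :: "int ^ 'n"
  proof -
    have "zball (ir a) R \<subseteq> zball (0::real^'n) S"
    proof
      fix y assume "y \<in> zball (ir a) R"
      have "\<bar>of_int (y $ i)\<bar> < S" for i
      proof -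
        have "\<bar>of_int (a $ i)\<bar> < S - R" using that by (simp add: mem_zball)
        moreover have "\<bar>of_int (a $ i) - of_int (y $ i)\<bar> < R" using \<open>y \<in> zball (ir a) R\<close> by (simp add: mem_zball)
        ultimately show ?thesis by linarith
      qed
      then show "y \<in> zball 0 S" by (simp add: mem_zball)
    qed
    then have "zball (0::real^'n) S \<inter> zball (ir a) R = zball (ir a) R" by blast
    then show ?thesis unfolding cR_def by (simp add: card_zball_int_center)
  qed
  have "cR * real (card (A \<inter> zball (0::real^'n) (S - R)))
      = (\<Sum>a\<in>A \<inter> zball (0::real^'n) (S - R). real (card (zball (0::real^'n) S \<inter> zball (ir a) R)))"
    by (simp add: eqc)
  also have "\<dots> \<le> (\<Sum>a\<in>A \<inter> zball (0::real^'n) (S + R). real (card (zball (0::real^'n) S \<inter> zball (ir a) R)))"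
    by (rule sum_mono2) (use sub in auto)
  finally show "cR * real (card (A \<inter> zball (0::real^'n) (S - R))) \<le> (\<Sum>y\<in>zball (0::real^'n) S. real (card (A \<inter> zball (ir y) R)))"
    unfolding eq .
qed


lemma bt_bounds:
  assumes "R \<ge> 0" "T \<ge> R + 1"
  shows "real (card (zball (0::real^'n) (T+R))) \<le> (2*T + (2*R+1))^CARD('n)"
    and "(2*T - (2*R+1))^CARD('n) \<le> real (card (zball (0::real^'n) (T - R)))"
    and "(2*T - (2*R+1))^CARD('n) \<le> real (card (zball (0::real^'n) T))"
    and "real (card (zball (0::real^'n) T)) \<le> (2*T + (2*R+1))^CARD('n)"
    and "(2*T - (2*R+1))^CARD('n) > 0"
proof -
  show "real (card (zball (0::real^'n) (T+R))) \<le> (2*T + (2*R+1))^CARD('n)"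
    using card_zball_bounds(2)[of "T+R" "0::real^'n"] assms by (simp add: algebra_simps)
  show "(2*T - (2*R+1))^CARD('n) \<le> real (card (zball (0::real^'n) (T - R)))"
    using card_zball_bounds(1)[of "T-R" "0::real^'n"] assms by (simp add: algebra_simps)
  have "(2*T - (2*R+1))^CARD('n) \<le> (2*T - 1)^CARD('n)"
    by (rule power_mono) (use assms in auto)
  also have "\<dots> \<le> real (card (zball (0::real^'n) T))"
    using card_zball_bounds(1)[of "T" "0::real^'n"] assms by simp
  finally show "(2*T - (2*R+1))^CARD('n) \<le> real (card (zball (0::real^'n) T))" .
  have "real (card (zball (0::real^'n) T)) \<le> (2*T + 1)^CARD('n)"
    using card_zball_bounds(2)[of "T" "0::real^'n"] assms by simp
  also have "\<dots> \<le> (2*T + (2*R+1))^CARD('n)"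
    by (rule power_mono) (use assms in auto)
  finally show "real (card (zball (0::real^'n) T)) \<le> (2*T + (2*R+1))^CARD('n)" .
  show "(2*T - (2*R+1))^CARD('n) > 0" using assms by simp
qed

lemma est:
  fixes A :: "(int ^ 'n) set"
  assumes "APP A" "\<epsilon> > 0"
  shows "\<exists>R1. \<forall>R\<ge>R1. (\<forall>x y :: real^'n. \<bar>fr A x R - fr A y R\<bar> \<le> \<epsilon>) \<and>
           eventually (\<lambda>T. \<bar>fr A (0::real^'n) T - fr A (0::real^'n) R\<bar> \<le> 2*\<epsilon>) at_top"
proof -
  obtain R1 where R1: "\<And>R. R \<ge> R1 \<Longrightarrow> \<forall>x y :: real^'n. \<bar>fr A x R - fr A y R\<bar> \<le> \<epsilon>"
    using osc[OF assms] by blast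
  show ?thesis
  proof (rule exI[where x="max R1 1"], intro allI impI)
    fix R assume R: "max R1 1 \<le> R"
    have osc': "\<forall>x y :: real^'n. \<bar>fr A x R - fr A y R\<bar> \<le> \<epsilon>" using R R1 by auto
    define p where "p = fr A (0::real^'n) R"
    define cR where "cR = real (card (zball (0::real^'n) R))"
    define c where "c = 2*R + 1"
    define B where "B = (\<lambda>t. real (card (zball (0::real^'n) t)))"
    define K where "K = (\<lambda>t. real (card (A \<inter> zball (0::real^'n) t)))"
    have cR: "cR > 0" unfolding cR_def using card_zball_pos[of R "0::real^'n"] R by simp
    have pt: "(p - \<epsilon>) * cR \<le> real (card (A \<inter> zball (ir y) R)) \<and> real (card (A \<inter> zball (ir y) R)) \<le> (p + \<epsilon>) * cR"
      for y :: "int ^ 'n"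
    proof -
      have "\<bar>fr A (ir y) R - p\<bar> \<le> \<epsilon>" using osc' unfolding p_def by blast
      moreover have "fr A (ir y) R = real (card (A \<inter> zball (ir y) R)) / cR"
        unfolding fr_def cR_def by (simp add: card_zball_int_center)
      ultimately have "\<bar>real (card (A \<inter> zball (ir y) R)) / cR - p\<bar> \<le> \<epsilon>" by simp
      then show ?thesis using cR by (simp add: abs_le_iff field_simps)
    qed
    have sumb: "(p - \<epsilon>) * cR * B S \<le> (\<Sum>y\<in>zball (0::real^'n) S. real (card (A \<inter> zball (ir y) R)))
         \<and> (\<Sum>y\<in>zball (0::real^'n) S. real (card (A \<inter> zball (ir y) R))) \<le> (p + \<epsilon>) * cR * B S" for S
    proof
      show "(p - \<epsilon>) * cR * B S \<le> (\<Sum>y\<in>zball (0::real^'n) S. real (card (A \<inter> zball (ir y) R)))"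
        using sum_bounded_below[of "zball (0::real^'n) S" "(p - \<epsilon>) * cR" "\<lambda>y. real (card (A \<inter> zball (ir y) R))"] pt
        unfolding B_def by (simp add: mult.commute)
      show "(\<Sum>y\<in>zball (0::real^'n) S. real (card (A \<inter> zball (ir y) R))) \<le> (p + \<epsilon>) * cR * B S"
        using sum_bounded_above[of "zball (0::real^'n) S" "\<lambda>y. real (card (A \<inter> zball (ir y) R))" "(p + \<epsilon>) * cR"] pt
        unfolding B_def by (simp add: mult.commute)
    qed
    have upT: "K T \<le> (p + \<epsilon>) * B (T + R)" for T
    proof -
      have "cR * K T \<le> (p + \<epsilon>) * cR * B (T + R)"
        using dc_bounds(1)[of R A "T + R"] sumb[of "T + R"] R unfolding K_def cR_def by simp
      then have "cR * K T \<le> cR * ((p + \<epsilon>) * B (T + R))" by (simp only: mult_ac)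
      then show ?thesis using cR by (simp only: mult_le_cancel_left_pos)
    qed
    have loT: "(p - \<epsilon>) * B (T - R) \<le> K T" for T
    proof -
      have "(p - \<epsilon>) * cR * B (T - R) \<le> cR * K T"
        using dc_bounds(2)[of R A "T - R"] sumb[of "T - R"] R unfolding K_def cR_def by simp
      then have "cR * ((p - \<epsilon>) * B (T - R)) \<le> cR * K T" by (simp only: mult_ac)
      then show ?thesis using cR by (simp only: mult_le_cancel_left_pos)
    qed
    define Q where "Q = (\<lambda>T::real. ((2*T + c) / (2*T - c)) ^ CARD('n))"
    have Qlim: "(Q \<longlongrightarrow> 1) at_top" unfolding Q_def by (rule Q_lim)
    have p01: "0 \<le> p" "p \<le> 1" unfolding p_def by (rule fr_nonneg, rule fr_le1)
    have ev1: "eventually (\<lambda>T. (p + \<epsilon>) * Q T < p + 2*\<epsilon>) at_top"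
    proof -
      have "((\<lambda>T. (p + \<epsilon>) * Q T) \<longlongrightarrow> (p + \<epsilon>) * 1) at_top" by (intro tendsto_intros Qlim)
      then show ?thesis using assms(2) by (intro order_tendstoD(2)) auto
    qed
    have ev2: "eventually (\<lambda>T. p - 2*\<epsilon> < (p - \<epsilon>) / Q T) at_top"
    proof -
      have "((\<lambda>T. (p - \<epsilon>) / Q T) \<longlongrightarrow> (p - \<epsilon>) / 1) at_top" by (intro tendsto_intros Qlim) auto
      then show ?thesis using assms(2) by (intro order_tendstoD(1)) auto
    qed
    have ev3: "eventually (\<lambda>T::real. T \<ge> R + 1) at_top" by (rule eventually_ge_at_top)
    have "eventually (\<lambda>T. \<bar>fr A (0::real^'n) T - p\<bar> \<le> 2*\<epsilon>) at_top"
      using ev1 ev2 ev3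
    proof eventually_elim
      case (elim T)
      note bb = bt_bounds[of R T, folded c_def, where 'n='n] 
      have R0: "R \<ge> 0" using R by simp
      note b = bb[OF R0 elim(3)]
      have BT: "B T > 0" unfolding B_def using b(3,5) by linarith
      have frT: "fr A (0::real^'n) T = K T / B T" unfolding fr_def K_def B_def ..
      have KT0: "K T \<ge> 0" unfolding K_def by simp
      have Qeq: "Q T = (2*T + c)^CARD('n) / (2*T - c)^CARD('n)" unfolding Q_def by (simp add: power_divide)
      have up: "K T / B T < p + 2*\<epsilon>"
      proof -
        have "K T / B T \<le> (p + \<epsilon>) * B (T + R) / B T"
          using upT[of T] BT by (simp add: divide_right_mono)
        also have "\<dots> = (p + \<epsilon>) * (B (T + R) / B T)" by simp
        also have "\<dots> \<le> (p + \<epsilon>) * Q T"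
        proof (rule mult_left_mono)
          show "B (T + R) / B T \<le> Q T" unfolding Qeq
            by (rule frac_le) (use b BT in \<open>auto simp: B_def\<close>)
          show "0 \<le> p + \<epsilon>" using p01 assms by simp
        qed
        finally show ?thesis using elim(1) by linarith
      qed
      have lo: "p - 2*\<epsilon> \<le> K T / B T"
      proof (cases "p - \<epsilon> \<le> 0")
        case True
        have "0 \<le> K T / B T" using KT0 BT by simp
        then show ?thesis using True assms by linarith
      next
        case False
        have "(p - \<epsilon>) / Q T = (p - \<epsilon>) * ((2*T - c)^CARD('n) / (2*T + c)^CARD('n))"
          unfolding Qeq by simp
        also have "\<dots> \<le> (p - \<epsilon>) * (B (T - R) / B T)"
        proof (rule mult_left_mono)
          show "(2*T - c)^CARD('n) / (2*T + c)^CARD('n) \<le> B (T - R) / B T"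
            by (rule frac_le) (use b BT in \<open>auto simp: B_def\<close>)
          show "0 \<le> p - \<epsilon>" using False by simp
        qed
        also have "\<dots> = (p - \<epsilon>) * B (T - R) / B T" by simp
        also have "\<dots> \<le> K T / B T" using loT[of T] BT by (simp add: divide_right_mono)
        finally show ?thesis using elim(2) by linarith
      qed
      show ?case unfolding frT using up lo by (simp add: abs_le_iff)
    qed
    with osc' show "(\<forall>x y :: real^'n. \<bar>fr A x R - fr A y R\<bar> \<le> \<epsilon>) \<and>
           eventually (\<lambda>T. \<bar>fr A (0::real^'n) T - fr A (0::real^'n) R\<bar> \<le> 2*\<epsilon>) at_top"
      unfolding p_def by blast
  qed
qed


lemma ev_seq:
  assumes "eventually (P :: real \<Rightarrow> bool) at_top"
  shows "\<exists>M. \<forall>m\<ge>M. P (real m)"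
proof -
  have "eventually (\<lambda>m. P (real m)) sequentially"
    using filterlim_real_sequentially assms unfolding filterlim_iff by blast
  then show ?thesis unfolding eventually_sequentially .
qed

lemma UD:
  fixes A :: "(int ^ 'n) set"
  assumes "APP A"
  shows "((\<lambda>T. fr A (0::real^'n) T) \<longlongrightarrow> density A) at_top"
    and "\<forall>\<epsilon>>0. \<exists>R1. \<forall>R\<ge>R1. \<forall>x::real^'n. \<bar>fr A x R - density A\<bar> \<le> \<epsilon>"
proof -
  define u where "u = (\<lambda>m::nat. fr A (0::real^'n) (real m))"
  have "Cauchy u"
  proof (rule metric_CauchyI)
    fix e :: real assume e: "e > 0"
    obtain R1 where R1: "\<And>R. R \<ge> R1 \<Longrightarrow> eventually (\<lambda>T. \<bar>fr A (0::real^'n) T - fr A (0::real^'n) R\<bar> \<le> 2*(e/5)) at_top"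
      using est[OF assms, of "e/5"] e by auto
    obtain M where M: "\<And>m. m \<ge> M \<Longrightarrow> \<bar>u m - fr A (0::real^'n) R1\<bar> \<le> 2*(e/5)"
      using ev_seq[OF R1[OF order_refl]] unfolding u_def by blast
    show "\<exists>M. \<forall>m\<ge>M. \<forall>n\<ge>M. dist (u m) (u n) < e"
    proof (intro exI allI impI)
      fix m n assume "M \<le> m" "M \<le> n"
      with M[of m] M[of n] e show "dist (u m) (u n) < e" unfolding dist_real_def by linarith
    qed
  qed
  then have "u \<longlonglongrightarrow> lim u" by (simp add: Cauchy_convergent_iff convergent_LIMSEQ_iff)
  define L where "L = lim u"
  have uL: "u \<longlonglongrightarrow> L" unfolding L_def by fact
  have C: "\<exists>R1. \<forall>R\<ge>R1. (\<forall>x::real^'n. \<bar>fr A x R - L\<bar> \<le> e) \<and> eventually (\<lambda>T. \<bar>fr A (0::real^'n) T - L\<bar> \<le> e) at_top"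
    if e: "e > 0" for e
  proof -
    obtain R1 where R1: "\<And>R. R \<ge> R1 \<Longrightarrow> (\<forall>x y :: real^'n. \<bar>fr A x R - fr A y R\<bar> \<le> e/4) \<and>
           eventually (\<lambda>T. \<bar>fr A (0::real^'n) T - fr A (0::real^'n) R\<bar> \<le> 2*(e/4)) at_top"
      using est[OF assms, of "e/4"] e by auto
    show ?thesis
    proof (intro exI allI impI)
      fix R assume R: "R \<ge> R1"
      define p where "p = fr A (0::real^'n) R"
      have osc': "\<bar>fr A x R - p\<bar> \<le> e/4" for x :: "real^'n" using R1[OF R] unfolding p_def by blast
      have evT: "eventually (\<lambda>T. \<bar>fr A (0::real^'n) T - p\<bar> \<le> 2*(e/4)) at_top" using R1[OF R] unfolding p_def by blast
      obtain M where M: "\<And>m. m \<ge> M \<Longrightarrow> \<bar>u m - p\<bar> \<le> 2*(e/4)"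
        using ev_seq[OF evT] unfolding u_def by blast
      have "(\<lambda>m. \<bar>u m - p\<bar>) \<longlonglongrightarrow> \<bar>L - p\<bar>" by (intro tendsto_intros uL)
      then have Lp: "\<bar>L - p\<bar> \<le> 2*(e/4)"
      proof (rule tendsto_upperbound)
        show "eventually (\<lambda>m. \<bar>u m - p\<bar> \<le> 2*(e/4)) sequentially"
          unfolding eventually_sequentially using M by blast
      qed simp
      have "\<forall>x::real^'n. \<bar>fr A x R - L\<bar> \<le> e"
      proof
        fix x :: "real^'n" show "\<bar>fr A x R - L\<bar> \<le> e" using osc'[of x] Lp by linarith
      qed
      moreover have "eventually (\<lambda>T. \<bar>fr A (0::real^'n) T - L\<bar> \<le> e) at_top"
        using evT by eventually_elim (use Lp in linarith)
      ultimately show "(\<forall>x::real^'n. \<bar>fr A x R - L\<bar> \<le> e) \<and> eventually (\<lambda>T. \<bar>fr A (0::real^'n) T - L\<bar> \<le> e) at_top"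
        by blast
    qed
  qed
  have lim: "((\<lambda>T. fr A (0::real^'n) T) \<longlongrightarrow> L) at_top"
    unfolding tendsto_iff
  proof (intro allI impI)
    fix e :: real assume "e > 0"
    then obtain R1 where "eventually (\<lambda>T. \<bar>fr A (0::real^'n) T - L\<bar> \<le> e/2) at_top"
      using C[of "e/2"] by auto
    then show "eventually (\<lambda>T. dist (fr A (0::real^'n) T) L < e) at_top"
      by eventually_elim (use \<open>e > 0\<close> in \<open>simp add: dist_real_def\<close>)
  qed
  have dens: "density A = L"
  proof -
    have "density A = Lim at_top (\<lambda>T. fr A (0::real^'n) T)"
      unfolding density_def fr_def ..
    also have "\<dots> = L" by (rule tendsto_Lim[OF trivial_limit_at_top_linorder lim])
    finally show ?thesis .
  qed
  show "((\<lambda>T. fr A (0::real^'n) T) \<longlongrightarrow> density A) at_top" using lim dens by simp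
  show "\<forall>\<epsilon>>0. \<exists>R1. \<forall>R\<ge>R1. \<forall>x::real^'n. \<bar>fr A x R - density A\<bar> \<le> \<epsilon>"
    using C unfolding dens by blast
qed


lemma mem_translate: "z \<in> translate S v \<longleftrightarrow> z - v \<in> S"
  unfolding translate_def by (auto intro: image_eqI[where x="z - v"])

lemma APP_inter:
  fixes \<Gamma> :: "(int ^ 'n) set"
  assumes "APP \<Gamma>"
  shows "APP (\<Gamma> \<inter> translate \<Gamma> w)"
  unfolding APP_def
proof (intro allI impI)
  fix \<epsilon> :: real assume e: "\<epsilon> > 0"
  obtain R\<epsilon> N where RN: "R\<epsilon> > 0" "relatively_dense N"
    "\<And>R v x. R \<ge> R\<epsilon> \<Longrightarrow> v \<in> N \<Longrightarrow> real (card (((translate \<Gamma> v - \<Gamma>) \<union> (\<Gamma> - translate \<Gamma> v)) \<inter> zball x R)) \<le> \<epsilon>/2 * real (card (zball (x::real^'n) R))"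
    using assms e unfolding APP_def by (metis half_gt_zero)
  define A where "A = \<Gamma> \<inter> translate \<Gamma> w"
  show "\<exists>R\<epsilon>>0. \<exists>N. relatively_dense N \<and> (\<forall>R\<ge>R\<epsilon>. \<forall>v\<in>N. \<forall>x::real ^ 'n.
        real (card (((translate (\<Gamma> \<inter> translate \<Gamma> w) v - (\<Gamma> \<inter> translate \<Gamma> w)) \<union> ((\<Gamma> \<inter> translate \<Gamma> w) - translate (\<Gamma> \<inter> translate \<Gamma> w) v)) \<inter> zball x R)) \<le> \<epsilon> * real (card (zball x R)))"
    unfolding A_def[symmetric]
  proof (intro exI conjI allI impI ballI)
    show "R\<epsilon> > 0" "relatively_dense N" using RN by auto
    fix R v and x :: "real ^ 'n" assume R: "R \<ge> R\<epsilon>" and v: "v \<in> N"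
    define E where "E = (translate \<Gamma> v - \<Gamma>) \<union> (\<Gamma> - translate \<Gamma> v)"
    have sub: "(translate A v - A) \<union> (A - translate A v) \<subseteq> E \<union> translate E w"
    proof -
      have comm: "z - w - v = z - v - w" for z :: "int ^ 'n" by (simp add: diff_right_commute)
      show ?thesis unfolding A_def E_def by (auto simp: mem_translate comm)
    qed
    have "card (((translate A v - A) \<union> (A - translate A v)) \<inter> zball x R) \<le> card ((E \<inter> zball x R) \<union> (translate E w \<inter> zball x R))"
      by (rule card_mono) (use sub in auto)
    also have "\<dots> \<le> card (E \<inter> zball x R) + card (translate E w \<inter> zball x R)" by (rule card_Un_le)
    also have "card (translate E w \<inter> zball x R) = card (E \<inter> zball (x - ir w) R)"
      using card_translate_Int[of E w "x - ir w" R] by simp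
    finally have "real (card (((translate A v - A) \<union> (A - translate A v)) \<inter> zball x R))
        \<le> real (card (E \<inter> zball x R)) + real (card (E \<inter> zball (x - ir w) R))" by linarith
    also have "\<dots> \<le> \<epsilon>/2 * real (card (zball x R)) + \<epsilon>/2 * real (card (zball (x - ir w) R))"
      using RN(3)[OF R v, of x] RN(3)[OF R v, of "x - ir w"] unfolding E_def by linarith
    also have "card (zball (x - ir w) R) = card (zball x R)"
      using card_zball_translate[of "x - ir w" w R] by simp
    finally show "real (card (((translate A v - A) \<union> (A - translate A v)) \<inter> zball x R)) \<le> \<epsilon> * real (card (zball x R))"
      by simp
  qed
qed


lemma swap_identity:
  fixes \<Gamma> :: "(int ^ 'n) set"
  shows "(\<Sum>v\<in>zball x R. real (card ((\<Gamma> \<inter> translate \<Gamma> (- v)) \<inter> zball (0::real^'n) S)))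
       = (\<Sum>y\<in>\<Gamma> \<inter> zball (0::real^'n) S. real (card (\<Gamma> \<inter> zball (x + ir y) R)))"
proof -
  have 1: "(\<Gamma> \<inter> translate \<Gamma> (- v)) \<inter> zball (0::real^'n) S = {y \<in> \<Gamma> \<inter> zball 0 S. y + v \<in> \<Gamma>}" for v
  proof -
    have "y \<in> translate \<Gamma> (- v) \<longleftrightarrow> y + v \<in> \<Gamma>" for y unfolding mem_translate by simp
    then show ?thesis by blast
  qed
  have 2: "card (\<Gamma> \<inter> zball (x + ir y) R) = card {v \<in> zball x R. y + v \<in> \<Gamma>}" for y :: "int ^ 'n"
  proof -
    have comm: "v + y = y + v" for v :: "int ^ 'n" by (rule add.commute)
    have "\<Gamma> \<inter> zball (x + ir y) R = (\<lambda>v. v + y) ` {v \<in> zball x R. y + v \<in> \<Gamma>}"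
      unfolding zball_translate[symmetric] comm by blast
    moreover have "inj_on (\<lambda>v. v + y) {v \<in> zball x R. y + v \<in> \<Gamma>}" by (simp add: inj_on_def)
    ultimately show ?thesis by (simp add: card_image)
  qed
  have "(\<Sum>v\<in>zball x R. card ((\<Gamma> \<inter> translate \<Gamma> (- v)) \<inter> zball (0::real^'n) S))
      = (\<Sum>v\<in>zball x R. card {y \<in> \<Gamma> \<inter> zball (0::real^'n) S. y + v \<in> \<Gamma>})"
    by (simp only: 1)
  also have "\<dots> = (\<Sum>y\<in>\<Gamma> \<inter> zball (0::real^'n) S. card {v \<in> zball x R. y + v \<in> \<Gamma>})"
    by (rule sum_card_swap) auto
  also have "\<dots> = (\<Sum>y\<in>\<Gamma> \<inter> zball (0::real^'n) S. card (\<Gamma> \<inter> zball (x + ir y) R))"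
    by (simp only: 2)
  finally have nat_eq: "(\<Sum>v\<in>zball x R. card ((\<Gamma> \<inter> translate \<Gamma> (- v)) \<inter> zball (0::real^'n) S))
      = (\<Sum>y\<in>\<Gamma> \<inter> zball (0::real^'n) S. card (\<Gamma> \<inter> zball (x + ir y) R))" .
  show ?thesis unfolding of_nat_sum[symmetric] nat_eq ..
qed

theorem proposition2p8:
  fixes \<Gamma> :: "(int ^ 'n) set"
  assumes "almost_periodic_pattern \<Gamma>"
  shows "\<forall>\<epsilon>>0. \<exists>R0>0. \<forall>R\<ge>R0. \<forall>x :: real ^ 'n.
           \<bar>density \<Gamma> - (1 / real (card (zball x R))) * (\<Sum>v\<in>zball x R. rho \<Gamma> v)\<bar> < \<epsilon>"
proof (intro allI impI)
  fix \<epsilon> :: real assume e: "\<epsilon> > 0"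
  have AG: "APP \<Gamma>" using assms by (rule AP_imp_APP)
  define D where "D = density \<Gamma>"
  have limG: "((\<lambda>T. fr \<Gamma> (0::real^'n) T) \<longlongrightarrow> D) at_top" unfolding D_def by (rule UD(1)[OF AG])
  have D0: "D \<ge> 0"
    by (rule tendsto_lowerbound[OF limG]) (simp_all add: fr_nonneg)
  show "\<exists>R0>0. \<forall>R\<ge>R0. \<forall>x :: real ^ 'n.
           \<bar>density \<Gamma> - (1 / real (card (zball x R))) * (\<Sum>v\<in>zball x R. rho \<Gamma> v)\<bar> < \<epsilon>"
  proof (cases "D = 0")
    case True
    have "rho \<Gamma> v = 0" for v unfolding rho_def using True D_def by simp
    then show ?thesis using True e unfolding D_def by (intro exI[where x=1]) auto
  next
    case False
    with D0 have Dpos: "D > 0" by simp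
    obtain R1 where R1: "\<And>R x. R \<ge> R1 \<Longrightarrow> \<bar>fr \<Gamma> (x::real^'n) R - D\<bar> \<le> \<epsilon>/2"
      using UD(2)[OF AG] e unfolding D_def[symmetric] by (metis half_gt_zero)
    show ?thesis
    proof (intro exI[where x="max R1 1"] conjI allI impI)
      show "max R1 1 > 0" by simp
      fix R and x :: "real ^ 'n" assume R: "max R1 1 \<le> R"
      define V where "V = zball x R"
      define cV where "cV = real (card V)"
      have cV: "cV > 0" unfolding cV_def V_def using card_zball_pos[of R x] R by simp
      define dv where "dv = (\<lambda>v. density (\<Gamma> \<inter> translate \<Gamma> (- v)))"
      define h where "h = (\<lambda>S. \<Sum>v\<in>V. fr (\<Gamma> \<inter> translate \<Gamma> (- v)) (0::real^'n) S)"
      have hlim: "(h \<longlongrightarrow> (\<Sum>v\<in>V. dv v)) at_top"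
        unfolding h_def dv_def by (intro tendsto_sum UD(1) APP_inter AG)
      have pt: "(D - \<epsilon>/2) * cV \<le> real (card (\<Gamma> \<inter> zball (x + ir y) R)) \<and> real (card (\<Gamma> \<inter> zball (x + ir y) R)) \<le> (D + \<epsilon>/2) * cV"
        for y :: "int ^ 'n"
      proof -
        have "\<bar>fr \<Gamma> (x + ir y) R - D\<bar> \<le> \<epsilon>/2" using R1 R by simp
        moreover have "fr \<Gamma> (x + ir y) R = real (card (\<Gamma> \<inter> zball (x + ir y) R)) / cV"
          unfolding fr_def cV_def V_def by (simp add: card_zball_translate)
        ultimately have a: "\<bar>real (card (\<Gamma> \<inter> zball (x + ir y) R)) / cV - D\<bar> \<le> \<epsilon>/2" by simp
        define c where "c = real (card (\<Gamma> \<inter> zball (x + ir y) R))"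
        have eq: "c - D * cV = (c / cV - D) * cV" using cV by (simp add: field_simps)
        have "\<bar>c - D * cV\<bar> = \<bar>c / cV - D\<bar> * cV" unfolding eq abs_mult using cV by simp
        also have "\<dots> \<le> \<epsilon>/2 * cV" using a cV unfolding c_def by (intro mult_right_mono) auto
        finally have "\<bar>c - D * cV\<bar> \<le> \<epsilon>/2 * cV" .
        then show ?thesis unfolding c_def[symmetric] abs_le_iff left_diff_distrib distrib_right by linarith
      qed
      have hS: "h S = (\<Sum>y\<in>\<Gamma> \<inter> zball (0::real^'n) S. real (card (\<Gamma> \<inter> zball (x + ir y) R))) / real (card (zball (0::real^'n) S))" for S
        unfolding h_def fr_def V_def sum_divide_distrib[symmetric] swap_identity ..
      have frG: "fr \<Gamma> (0::real^'n) S = real (card (\<Gamma> \<inter> zball (0::real^'n) S)) / real (card (zball (0::real^'n) S))" for S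
        unfolding fr_def ..
      have hup: "h S \<le> (D + \<epsilon>/2) * cV * fr \<Gamma> (0::real^'n) S" for S
      proof -
        have "(\<Sum>y\<in>\<Gamma> \<inter> zball (0::real^'n) S. real (card (\<Gamma> \<inter> zball (x + ir y) R))) \<le> real (card (\<Gamma> \<inter> zball (0::real^'n) S)) * ((D + \<epsilon>/2) * cV)"
          by (rule sum_bounded_above) (use pt in auto)
        then have "h S \<le> real (card (\<Gamma> \<inter> zball (0::real^'n) S)) * ((D + \<epsilon>/2) * cV) / real (card (zball (0::real^'n) S))"
          unfolding hS by (simp add: divide_right_mono)
        then show ?thesis unfolding frG by (simp add: mult_ac)
      qed
      have hlo: "(D - \<epsilon>/2) * cV * fr \<Gamma> (0::real^'n) S \<le> h S" for S
      proof -
        have "real (card (\<Gamma> \<inter> zball (0::real^'n) S)) * ((D - \<epsilon>/2) * cV) \<le> (\<Sum>y\<in>\<Gamma> \<inter> zball (0::real^'n) S. real (card (\<Gamma> \<inter> zball (x + ir y) R)))"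
          by (rule sum_bounded_below) (use pt in auto)
        then have "real (card (\<Gamma> \<inter> zball (0::real^'n) S)) * ((D - \<epsilon>/2) * cV) / real (card (zball (0::real^'n) S)) \<le> h S"
          unfolding hS by (simp add: divide_right_mono)
        then show ?thesis unfolding frG by (simp add: mult_ac)
      qed
      have l1: "((\<lambda>S. (D + \<epsilon>/2) * cV * fr \<Gamma> (0::real^'n) S) \<longlongrightarrow> (D + \<epsilon>/2) * cV * D) at_top"
        by (intro tendsto_intros limG)
      have l2: "((\<lambda>S. (D - \<epsilon>/2) * cV * fr \<Gamma> (0::real^'n) S) \<longlongrightarrow> (D - \<epsilon>/2) * cV * D) at_top"
        by (intro tendsto_intros limG)
      have up: "(\<Sum>v\<in>V. dv v) \<le> (D + \<epsilon>/2) * cV * D"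
        by (rule tendsto_le[OF trivial_limit_at_top_linorder l1 hlim]) (simp add: hup)
      have lo: "(D - \<epsilon>/2) * cV * D \<le> (\<Sum>v\<in>V. dv v)"
        by (rule tendsto_le[OF trivial_limit_at_top_linorder hlim l2]) (simp add: hlo)
      have avg: "(1 / cV) * (\<Sum>v\<in>V. rho \<Gamma> v) = (\<Sum>v\<in>V. dv v) / (cV * D)"
        unfolding rho_def dv_def D_def[symmetric] sum_divide_distrib[symmetric] by (simp add: field_simps)
      have "\<bar>D - (\<Sum>v\<in>V. dv v) / (cV * D)\<bar> \<le> \<epsilon>/2"
      proof -
        have cd: "cV * D > 0" using cV Dpos by simp
        have "(\<Sum>v\<in>V. dv v) / (cV * D) \<le> D + \<epsilon>/2"
          using up cd by (simp add: divide_le_eq mult_ac)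
        moreover have "D - \<epsilon>/2 \<le> (\<Sum>v\<in>V. dv v) / (cV * D)"
          using lo cd by (simp add: le_divide_eq mult_ac)
        ultimately show ?thesis unfolding abs_le_iff by linarith
      qed
      then have fin: "\<bar>D - (1 / cV) * (\<Sum>v\<in>V. rho \<Gamma> v)\<bar> < \<epsilon>"
      proof -
        have h2: "\<epsilon>/2 < \<epsilon>" using e by simp
        show ?thesis unfolding avg by (rule le_less_trans[OF \<open>\<bar>D - (\<Sum>v\<in>V. dv v) / (cV * D)\<bar> \<le> \<epsilon>/2\<close> h2])
      qed
      then show "\<bar>density \<Gamma> - (1 / real (card (zball x R))) * (\<Sum>v\<in>zball x R. rho \<Gamma> v)\<bar> < \<epsilon>"
        by (simp only: D_def cV_def V_def)
    qed
  qed
qed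

end
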